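(* Let $\mathcal{C}$ be a PL-cograph that takes more than one value. Then $\mathcal{C}$ takes at least three distinct values, and for any distinct points $P,Q$ there is a point $R$ such that $\mathcal{C}(P,Q)$, $\mathcal{C}(P,R)$ and $\mathcal{C}(Q,R)$ are pairwise distinct.
   Context: A cograph is a function $\mathcal{C}$ assigning to each unordered pair $\{P,Q\}$ of distinct elements of a point set a value $\mathcal{C}(P,Q)$ (an edge). A PL-cograph is a cograph satisfying: (1) for distinct points $P,Q,R$, if $\mathcal{C}(P,Q)=\mathcal{C}(Q,R)$ then $\mathcal{C}(P,Q)=\mathcal{C}(P,R)$; (2) for distinct points $P,Q,R,S$, if $\mathcal{C}(P,Q)=\mathcal{C}(R,S)$ then $\mathcal{C}(P,Q)=\mathcal{C}(P,R)=\mathcal{C}(P,S)=\mathcal{C}(Q,R)=\mathcal{C}(Q,S)$. *)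

theory Defs
  imports Main
begin

text \<open>A cograph on the point set X: a value C P Q for each unordered pair of
distinct points, modelled as a function symmetric on distinct points of X.\<close>
definition cograph :: "'a set \<Rightarrow> ('a \<Rightarrow> 'a \<Rightarrow> 'b) \<Rightarrow> bool" where
  "cograph X C \<longleftrightarrow> (\<forall>P\<in>X. \<forall>Q\<in>X. P \<noteq> Q \<longrightarrow> C P Q = C Q P)"

definition PL_cograph :: "'a set \<Rightarrow> ('a \<Rightarrow> 'a \<Rightarrow> 'b) \<Rightarrow> bool" where
  "PL_cograph X C \<longleftrightarrow> cograph X C \<and>
     (\<forall>P\<in>X. \<forall>Q\<in>X. \<forall>R\<in>X. P \<noteq> Q \<and> P \<noteq> R \<and> Q \<noteq> R \<longrightarrow>
        C P Q = C Q R \<longrightarrow> C P Q = C P R) \<and>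
     (\<forall>P\<in>X. \<forall>Q\<in>X. \<forall>R\<in>X. \<forall>S\<in>X.
        P \<noteq> Q \<and> P \<noteq> R \<and> P \<noteq> S \<and> Q \<noteq> R \<and> Q \<noteq> S \<and> R \<noteq> S \<longrightarrow>
        C P Q = C R S \<longrightarrow>
        C P Q = C P R \<and> C P Q = C P S \<and> C P Q = C Q R \<and> C P Q = C Q S)"

definition cograph_values :: "'a set \<Rightarrow> ('a \<Rightarrow> 'a \<Rightarrow> 'b) \<Rightarrow> 'b set" where
  "cograph_values X C = {C P Q | P Q. P \<in> X \<and> Q \<in> X \<and> P \<noteq> Q}"

end

theory Submission
  imports Defs
begin

lemma tri_aux:
  assumes "PL_cograph X C" "P \<in> X" "Q \<in> X" "R \<in> X" "P \<noteq> Q" "R \<noteq> P" "R \<noteq> Q"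
    and "C P R \<noteq> C P Q"
  shows "C P Q \<noteq> C Q R \<and> C P R \<noteq> C Q R"
proof -
  have sym: "\<And>A B. A \<in> X \<Longrightarrow> B \<in> X \<Longrightarrow> A \<noteq> B \<Longrightarrow> C A B = C B A"
    using assms(1) unfolding PL_cograph_def cograph_def by blast
  have ax1: "\<And>A B D. A \<in> X \<Longrightarrow> B \<in> X \<Longrightarrow> D \<in> X \<Longrightarrow> A \<noteq> B \<Longrightarrow> A \<noteq> D \<Longrightarrow> B \<noteq> D
     \<Longrightarrow> C A B = C B D \<Longrightarrow> C A B = C A D"
    using assms(1) unfolding PL_cograph_def by blast
  have 1: "C P Q \<noteq> C Q R"
    using ax1[of P Q R] assms by auto
  have 2: "C P R \<noteq> C Q R"
    using ax1[of P R Q] sym[of Q R] assms by auto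
  show ?thesis using 1 2 by blast
qed

lemma exists_tri:
  assumes "PL_cograph X C"
    and "\<exists>u\<in>cograph_values X C. \<exists>v\<in>cograph_values X C. u \<noteq> v"
    and "P \<in> X" "Q \<in> X" "P \<noteq> Q"
  shows "\<exists>R\<in>X. R \<noteq> P \<and> R \<noteq> Q \<and> C P Q \<noteq> C P R \<and> C P Q \<noteq> C Q R \<and> C P R \<noteq> C Q R"
proof -
  have sym: "\<And>A B. A \<in> X \<Longrightarrow> B \<in> X \<Longrightarrow> A \<noteq> B \<Longrightarrow> C A B = C B A"
    using assms(1) unfolding PL_cograph_def cograph_def by blast
  have ax1: "\<And>A B D. A \<in> X \<Longrightarrow> B \<in> X \<Longrightarrow> D \<in> X \<Longrightarrow> A \<noteq> B \<Longrightarrow> A \<noteq> D \<Longrightarrow> B \<noteq> D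
     \<Longrightarrow> C A B = C B D \<Longrightarrow> C A B = C A D"
    using assms(1) unfolding PL_cograph_def by blast
  obtain u v where uv: "u \<in> cograph_values X C" "v \<in> cograph_values X C" "u \<noteq> v"
    using assms(2) by blast
  have "\<exists>w\<in>cograph_values X C. w \<noteq> C P Q"
  proof (cases "u = C P Q")
    case True thus ?thesis using uv by (intro bexI[of _ v]) auto
  next
    case False thus ?thesis using uv by blast
  qed
  then obtain w where "w \<in> cograph_values X C" "w \<noteq> C P Q" by blast
  then obtain S T where ST: "S \<in> X" "T \<in> X" "S \<noteq> T" "C S T \<noteq> C P Q"
    unfolding cograph_values_def by blast
  have "\<exists>R\<in>X. R \<noteq> P \<and> R \<noteq> Q \<and> (C P R \<noteq> C P Q \<or> C Q R \<noteq> C P Q)"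
  proof (rule ccontr)
    assume H: "\<not> ?thesis"
    hence H1: "\<And>R. R \<in> X \<Longrightarrow> R \<noteq> P \<Longrightarrow> R \<noteq> Q \<Longrightarrow> C P R = C P Q"
      and H2: "\<And>R. R \<in> X \<Longrightarrow> R \<noteq> P \<Longrightarrow> R \<noteq> Q \<Longrightarrow> C Q R = C P Q" by auto
    have HQ: "C Q P = C P Q" using sym[of Q P] assms by auto
    have all: "\<And>A B. A \<in> X \<Longrightarrow> B \<in> X \<Longrightarrow> A \<noteq> B \<Longrightarrow> C A B = C P Q"
    proof -
      fix A B assume AB: "A \<in> X" "B \<in> X" "A \<noteq> B"
      show "C A B = C P Q"
      proof (cases "A \<in> {P,Q} \<or> B \<in> {P,Q}")
        case True
        show ?thesis
        proof -
          { assume "A = P" hence ?thesis using AB H1[of B] by (cases "B = Q") auto }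
          moreover
          { assume "A = Q" hence ?thesis using AB H2[of B] HQ by (cases "B = P") auto }
          moreover
          { assume "B = P" "A \<noteq> P" "A \<noteq> Q" hence ?thesis using AB H1[of A] sym[of A B] by auto }
          moreover
          { assume "B = Q" "A \<noteq> P" "A \<noteq> Q" hence ?thesis using AB H2[of A] sym[of A B] by auto }
          ultimately show ?thesis using True by blast
        qed
      next
        case False
        hence "C A P = C P B" using AB H1[of A] H1[of B] sym[of A P] assms by auto
        hence "C A P = C A B" using ax1[of A P B] AB False assms by auto
        thus ?thesis using AB H1[of A] sym[of A P] assms False by auto
      qed
    qed
    thus False using ST all by blast
  qed
  then obtain R where R: "R \<in> X" "R \<noteq> P" "R \<noteq> Q" "C P R \<noteq> C P Q \<or> C Q R \<noteq> C P Q" by blast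
  show ?thesis
  proof (cases "C P R \<noteq> C P Q")
    case True
    then show ?thesis using tri_aux[OF assms(1) assms(3,4) R(1) assms(5) R(2,3)] R by auto
  next
    case False
    hence c: "C Q R \<noteq> C Q P" using R sym[of Q P] assms by auto
    have "C Q P \<noteq> C P R \<and> C Q R \<noteq> C P R"
      using tri_aux[OF assms(1) assms(4,3) R(1) assms(5)[symmetric] R(3,2) c] .
    then show ?thesis using R c sym[of Q P] assms by auto
  qed
qed

theorem lemma5p1:
  fixes X :: "'a set" and C :: "'a \<Rightarrow> 'a \<Rightarrow> 'b"
  assumes "PL_cograph X C"
    and "\<exists>u\<in>cograph_values X C. \<exists>v\<in>cograph_values X C. u \<noteq> v"
  shows "(\<exists>u\<in>cograph_values X C. \<exists>v\<in>cograph_values X C. \<exists>w\<in>cograph_values X C.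
            u \<noteq> v \<and> u \<noteq> w \<and> v \<noteq> w)
       \<and> (\<forall>P\<in>X. \<forall>Q\<in>X. P \<noteq> Q \<longrightarrow>
            (\<exists>R\<in>X. R \<noteq> P \<and> R \<noteq> Q \<and> C P Q \<noteq> C P R \<and> C P Q \<noteq> C Q R \<and> C P R \<noteq> C Q R))"
proof
  show 2: "\<forall>P\<in>X. \<forall>Q\<in>X. P \<noteq> Q \<longrightarrow>
            (\<exists>R\<in>X. R \<noteq> P \<and> R \<noteq> Q \<and> C P Q \<noteq> C P R \<and> C P Q \<noteq> C Q R \<and> C P R \<noteq> C Q R)"
    using exists_tri[OF assms] by blast
  obtain P Q where PQ: "P \<in> X" "Q \<in> X" "P \<noteq> Q"
    using assms(2) unfolding cograph_values_def by blast
  then obtain R where R: "R \<in> X" "R \<noteq> P" "R \<noteq> Q" "C P Q \<noteq> C P R" "C P Q \<noteq> C Q R" "C P R \<noteq> C Q R"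
    using 2 by blast
  have "C P Q \<in> cograph_values X C" "C P R \<in> cograph_values X C" "C Q R \<in> cograph_values X C"
    unfolding cograph_values_def using PQ R by blast+
  thus "\<exists>u\<in>cograph_values X C. \<exists>v\<in>cograph_values X C. \<exists>w\<in>cograph_values X C.
            u \<noteq> v \<and> u \<noteq> w \<and> v \<noteq> w" using R by blast
qed

end
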